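(* Let $C$ be a $d$-copula and let $C_1,\ldots,C_d$ be $2$-copulas such that the tail dependence functions $\Lambda_{C_i}:=\Lambda(\cdot;C_i)$ and $\Lambda(\cdot;\phi_C(C_1,\ldots,C_d))$ exist. Suppose that for all $w_i\in\mathbb{R}_+$ and almost all $t\in\mathbb{R}_+$, $$\lim_{s\searrow0}\partial_1C_i(st,sw_i)=\partial_1\Lambda_{C_i}(t,w_i)\quad\text{for all }i=1,\ldots,d.$$ Then $\phi_C(\Lambda_{C_1},\ldots,\Lambda_{C_d})(\mathbf{w})\le\Lambda(\mathbf{w};\phi_C(C_1,\ldots,C_d))$ for all $\mathbf{w}\in\mathbb{R}_+^d$. If, additionally, there is $\ell\in\{1,\ldots,d\}$ and a family $(g_w)_{w\in[0,1]}$ of integrable functions on $\mathbb{R}_+$ such that $\partial_1C_\ell(s\tau,sw_\ell)\mathbf{1}_{[0,1/s]}(\tau)\le g_{w_\ell}(\tau)$ for all $w_\ell\in[0,1]$ (and all $s\in(0,1]$, $\tau\ge0$), then $\phi_C(\Lambda_{C_1},\ldots,\Lambda_{C_d})(\mathbf{w})=\Lambda(\mathbf{w};\phi_C(C_1,\ldots,C_d))$.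
   Context: A $d$-copula is a distribution function on $[0,1]^d$ with uniform margins. The tail dependence function of a $d$-copula $D$ is $\Lambda(\mathbf{w};D):=\lim_{s\searrow0}D(s\mathbf{w})/s$ for $\mathbf{w}\in\mathbb{R}_+^d$, $\mathbb{R}_+=[0,\infty)$, when the limit exists for all $\mathbf{w}$. For $2$-copulas $C_1,\ldots,C_d$, $\phi_C(C_1,\ldots,C_d)(v_1,\ldots,v_d):=\int_0^1C(\partial_1C_1(t,v_1),\ldots,\partial_1C_d(t,v_d))\,dt$ (a $d$-copula). For bivariate tail dependence functions $\Lambda_1,\ldots,\Lambda_d$, $\phi_C(\Lambda_1,\ldots,\Lambda_d)(w_1,\ldots,w_d):=\int_0^\infty C(\partial_1\Lambda_1(t,w_1),\ldots,\partial_1\Lambda_d(t,w_d))\,dt$. Partial derivatives are defined almost everywhere. *)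

theory Defs
  imports "HOL-Analysis.Analysis"
begin

text \<open>Copulas are represented as real-valued functions on all of R^d, extended from
[0,1]^d by clamping each coordinate to [0,1] (i.e. viewed as the distribution function
on R^d of a distribution on [0,1]^d).\<close>

definition clamp01 :: "real \<Rightarrow> real" where
  "clamp01 x = max 0 (min 1 x)"

definition is_copula :: "(('d::finite \<Rightarrow> real) \<Rightarrow> real) \<Rightarrow> bool" where
  "is_copula C \<longleftrightarrow>
     (\<forall>u. C u = C (\<lambda>i. clamp01 (u i))) \<and>
     (\<forall>u. (\<forall>i. 0 \<le> u i \<and> u i \<le> 1) \<longrightarrow> (\<exists>i. u i = 0) \<longrightarrow> C u = 0) \<and>
     (\<forall>i x. 0 \<le> x \<and> x \<le> 1 \<longrightarrow> C ((\<lambda>_. 1)(i := x)) = x) \<and>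
     (\<forall>a b. (\<forall>i. 0 \<le> a i \<and> a i \<le> b i \<and> b i \<le> 1) \<longrightarrow>
        0 \<le> (\<Sum>S\<in>Pow (UNIV :: 'd set). (-1) ^ card S * C (\<lambda>i. if i \<in> S then a i else b i)))"

definition is_copula2 :: "(real \<Rightarrow> real \<Rightarrow> real) \<Rightarrow> bool" where
  "is_copula2 C \<longleftrightarrow>
     (\<forall>u v. C u v = C (clamp01 u) (clamp01 v)) \<and>
     (\<forall>x. 0 \<le> x \<and> x \<le> 1 \<longrightarrow> C 0 x = 0 \<and> C x 0 = 0 \<and> C x 1 = x \<and> C 1 x = x) \<and>
     (\<forall>a1 a2 b1 b2. 0 \<le> a1 \<and> a1 \<le> b1 \<and> b1 \<le> 1 \<and> 0 \<le> a2 \<and> a2 \<le> b2 \<and> b2 \<le> 1 \<longrightarrow>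
        0 \<le> C b1 b2 - C a1 b2 - C b1 a2 + C a1 a2)"

text \<open>Partial derivative in the first argument; set to 0 where it does not exist
(only its almost-everywhere values matter).\<close>
definition partial1 :: "(real \<Rightarrow> real \<Rightarrow> real) \<Rightarrow> real \<Rightarrow> real \<Rightarrow> real" where
  "partial1 f t v = (if (\<lambda>x. f x v) differentiable (at t) then deriv (\<lambda>x. f x v) t else 0)"

definition is_tdf :: "(('d::finite \<Rightarrow> real) \<Rightarrow> real) \<Rightarrow> (('d \<Rightarrow> real) \<Rightarrow> real) \<Rightarrow> bool" where
  "is_tdf D L \<longleftrightarrow> (\<forall>w. (\<forall>i. 0 \<le> w i) \<longrightarrow>
      ((\<lambda>s. D (\<lambda>i. s * w i) / s) \<longlongrightarrow> L w) (at_right 0))"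

definition is_tdf2 :: "(real \<Rightarrow> real \<Rightarrow> real) \<Rightarrow> (real \<Rightarrow> real \<Rightarrow> real) \<Rightarrow> bool" where
  "is_tdf2 D L \<longleftrightarrow> (\<forall>w1 w2. 0 \<le> w1 \<longrightarrow> 0 \<le> w2 \<longrightarrow>
      ((\<lambda>s. D (s * w1) (s * w2) / s) \<longlongrightarrow> L w1 w2) (at_right 0))"

definition phiC :: "(('d::finite \<Rightarrow> real) \<Rightarrow> real) \<Rightarrow> ('d \<Rightarrow> real \<Rightarrow> real \<Rightarrow> real)
    \<Rightarrow> ('d \<Rightarrow> real) \<Rightarrow> real" where
  "phiC C Cs v = (LINT t:{0..1}|lborel. C (\<lambda>i. partial1 (Cs i) t (v i)))"

definition phiL :: "(('d::finite \<Rightarrow> real) \<Rightarrow> real) \<Rightarrow> ('d \<Rightarrow> real \<Rightarrow> real \<Rightarrow> real)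
    \<Rightarrow> ('d \<Rightarrow> real) \<Rightarrow> ennreal" where
  "phiL C Ls w = (\<integral>\<^sup>+ t. ennreal (C (\<lambda>i. partial1 (Ls i) t (w i))) * indicator {0..} t \<partial>lborel)"

end

theory Submission imports Defs begin

lemma clamp01_in: "0 \<le> clamp01 x" "clamp01 x \<le> 1"
  by (auto simp: clamp01_def)

lemma clamp01_id: "0 \<le> x \<Longrightarrow> x \<le> 1 \<Longrightarrow> clamp01 x = x"
  by (auto simp: clamp01_def)

lemma clamp01_lip: "\<bar>clamp01 x - clamp01 y\<bar> \<le> \<bar>x - y\<bar>"
  by (auto simp: clamp01_def)

lemma clamp01_mono: "x \<le> y \<Longrightarrow> clamp01 x \<le> clamp01 y"
  by (auto simp: clamp01_def)

definition vol :: "(('d::finite \<Rightarrow> real) \<Rightarrow> real) \<Rightarrow> ('d \<Rightarrow> real) \<Rightarrow> ('d \<Rightarrow> real) \<Rightarrow> real" where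
  "vol C a b = (\<Sum>S\<in>Pow (UNIV :: 'd set). (-1) ^ card S * C (\<lambda>i. if i \<in> S then a i else b i))"

lemma vol_reduce:
  fixes C :: "('d::finite \<Rightarrow> real) \<Rightarrow> real"
  assumes C: "is_copula C"
    and ab: "\<And>i. 0 \<le> a i \<and> a i \<le> b i \<and> b i \<le> 1"
    and zero: "\<And>k. k \<notin> J \<Longrightarrow> a k = 0"
  shows "vol C a b = (\<Sum>S\<in>Pow J. (-1) ^ card S * C (\<lambda>i. if i \<in> S then a i else b i))"
proof -
  have gr: "C (\<lambda>i. if i \<in> S then a i else b i) = 0" if "\<not> S \<subseteq> J" for S
  proof -
    from that obtain k where k: "k \<in> S" "k \<notin> J" by auto
    have "\<forall>u. (\<forall>i. 0 \<le> u i \<and> u i \<le> 1) \<longrightarrow> (\<exists>i. u i = 0) \<longrightarrow> C u = 0"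
      using C unfolding is_copula_def by blast
    moreover have "\<forall>i. 0 \<le> (if i \<in> S then a i else b i) \<and> (if i \<in> S then a i else b i) \<le> 1"
    proof
      fix i show "0 \<le> (if i \<in> S then a i else b i) \<and> (if i \<in> S then a i else b i) \<le> 1"
        using ab[of i] by (cases "i \<in> S") auto
    qed
    moreover have "(if k \<in> S then a k else b k) = 0" using k zero by auto
    ultimately show ?thesis by (metis (mono_tags, lifting))
  qed
  have "vol C a b = (\<Sum>S\<in>Pow J. (-1) ^ card S * C (\<lambda>i. if i \<in> S then a i else b i))
     + (\<Sum>S\<in>Pow UNIV - Pow J. (-1) ^ card S * C (\<lambda>i. if i \<in> S then a i else b i))"
    unfolding vol_def by (subst sum.subset_diff[of "Pow J"]) auto
  also have "(\<Sum>S\<in>Pow UNIV - Pow J. (-1) ^ card S * C (\<lambda>i. if i \<in> S then a i else b i)) = 0"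
    by (intro sum.neutral) (auto simp: gr)
  finally show ?thesis by simp
qed

lemma vol_nonneg:
  assumes C: "is_copula C" and ab: "\<And>i. 0 \<le> a i \<and> a i \<le> b i \<and> b i \<le> 1"
  shows "0 \<le> vol C a b"
  using C ab unfolding is_copula_def vol_def by blast


lemma cop_mono_coord:
  fixes C :: "('d::finite \<Rightarrow> real) \<Rightarrow> real"
  assumes C: "is_copula C" and u: "\<And>k. 0 \<le> u k \<and> u k \<le> 1"
    and ab: "0 \<le> a" "a \<le> b" "b \<le> 1"
  shows "C (u(i:=a)) \<le> C (u(i:=b))"
proof -
  define x where "x = (\<lambda>_. 0::real)(i:=a)"
  define y where "y = u(i:=b)"
  have xy: "\<And>k. 0 \<le> x k \<and> x k \<le> y k \<and> y k \<le> 1" using u ab by (auto simp: x_def y_def)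
  have "vol C x y = (\<Sum>S\<in>Pow {i}. (-1) ^ card S * C (\<lambda>k. if k \<in> S then x k else y k))"
    by (rule vol_reduce[OF C xy]) (auto simp: x_def)
  also have "Pow {i} = {{}, {i}}" by (auto simp: Pow_def)
  also have "(\<Sum>S\<in>{{}, {i}}. (-1) ^ card S * C (\<lambda>k. if k \<in> S then x k else y k))
     = C y - C (\<lambda>k. if k \<in> {i} then x k else y k)"
    by simp
  also have "(\<lambda>k. if k \<in> {i} then x k else y k) = u(i:=a)"
    by (auto simp: x_def y_def)
  finally have V: "vol C x y = C y - C (u(i:=a))" .
  have "0 \<le> vol C x y" by (rule vol_nonneg[OF C]) (rule xy)
  with V show ?thesis unfolding y_def by linarith
qed

lemma cop_delta_mono:
  fixes C :: "('d::finite \<Rightarrow> real) \<Rightarrow> real"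
  assumes C: "is_copula C" and u: "\<And>k. 0 \<le> u k \<and> u k \<le> 1"
    and ab: "0 \<le> a" "a \<le> b" "b \<le> 1" and ij: "j \<noteq> i" and c: "u j \<le> c" "c \<le> 1"
  shows "C (u(i:=b)) - C (u(i:=a)) \<le> C (u(j:=c, i:=b)) - C (u(j:=c, i:=a))"
proof -
  define x where "x = (\<lambda>_. 0::real)(i:=a, j:=u j)"
  define y where "y = u(j:=c, i:=b)"
  have xy: "\<And>k. 0 \<le> x k \<and> x k \<le> y k \<and> y k \<le> 1" using u ab c ij by (auto simp: x_def y_def)
  have "vol C x y = (\<Sum>S\<in>Pow {i,j}. (-1) ^ card S * C (\<lambda>k. if k \<in> S then x k else y k))"
    by (rule vol_reduce[OF C xy]) (auto simp: x_def)
  also have "Pow {i,j} = {{}, {i}, {j}, {i,j}}" by (auto simp: Pow_def)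
  also have "(\<Sum>S\<in>{{}, {i}, {j}, {i,j}}. (-1) ^ card S * C (\<lambda>k. if k \<in> S then x k else y k))
     = C y - C (\<lambda>k. if k \<in> {i} then x k else y k) - C (\<lambda>k. if k \<in> {j} then x k else y k)
       + C (\<lambda>k. if k \<in> {i,j} then x k else y k)"
    using ij by (simp add: insert_commute)
  also have "(\<lambda>k. if k \<in> {i} then x k else y k) = u(j:=c, i:=a)"
    using ij by (auto simp: x_def y_def)
  also have "(\<lambda>k. if k \<in> {j} then x k else y k) = u(i:=b)"
    using ij by (auto simp: x_def y_def)
  also have "(\<lambda>k. if k \<in> {i,j} then x k else y k) = u(i:=a)"
    using ij by (auto simp: x_def y_def)
  finally have V: "vol C x y = C y - C (u(j:=c, i:=a)) - C (u(i:=b)) + C (u(i:=a))" .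
  have "0 \<le> vol C x y" by (rule vol_nonneg[OF C]) (rule xy)
  with V show ?thesis unfolding y_def by linarith
qed


lemma cop_delta_le:
  fixes C :: "('d::finite \<Rightarrow> real) \<Rightarrow> real"
  assumes C: "is_copula C" and u: "\<And>k. 0 \<le> u k \<and> u k \<le> 1"
    and ab: "0 \<le> a" "a \<le> b" "b \<le> 1"
  shows "C (u(i:=b)) - C (u(i:=a)) \<le> b - a"
proof -
  have step: "C (u(i:=b)) - C (u(i:=a)) \<le>
      C ((\<lambda>k. if k \<in> J then 1 else u k)(i:=b)) - C ((\<lambda>k. if k \<in> J then 1 else u k)(i:=a))"
    if "finite J" for J
    using that
  proof (induction J rule: finite_induct)
    case empty
    then show ?case by simp
  next
    case (insert j J)
    define v where "v = (\<lambda>k. if k \<in> J then 1 else u k)"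
    have v: "\<And>k. 0 \<le> v k \<and> v k \<le> 1" using u by (auto simp: v_def)
    have eq: "(\<lambda>k. if k \<in> insert j J then 1 else u k) = v(j:=1)"
      by (auto simp: v_def)
    show ?case
    proof (cases "j = i")
      case True
      have e1: "(v(j:=1))(i:=b) = v(i:=b)" and e2: "(v(j:=1))(i:=a) = v(i:=a)" using True by auto
      show ?thesis using insert.IH unfolding eq v_def[symmetric] e1 e2 by linarith
    next
      case False
      have "C (v(i:=b)) - C (v(i:=a)) \<le> C (v(j:=1, i:=b)) - C (v(j:=1, i:=a))"
        by (rule cop_delta_mono[OF C v ab False]) (use v in auto)
      then show ?thesis using insert.IH unfolding eq v_def[symmetric] by linarith
    qed
  qed
  have "(\<lambda>k. if k \<in> (UNIV::'d set) then 1 else u k) = (\<lambda>_. 1)" by auto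
  with step[of UNIV] have "C (u(i:=b)) - C (u(i:=a)) \<le> C ((\<lambda>_. 1)(i:=b)) - C ((\<lambda>_. 1)(i:=a))"
    by simp
  also have "\<dots> = b - a" using C ab unfolding is_copula_def by simp
  finally show ?thesis .
qed

lemma cop_coord_lip:
  fixes C :: "('d::finite \<Rightarrow> real) \<Rightarrow> real"
  assumes C: "is_copula C" and u: "\<And>k. 0 \<le> u k \<and> u k \<le> 1"
    and a: "0 \<le> a" "a \<le> 1"
  shows "\<bar>C u - C (u(i:=a))\<bar> \<le> \<bar>u i - a\<bar>"
proof -
  have uu: "u = u(i := u i)" by simp
  show ?thesis
  proof (cases "a \<le> u i")
    case True
    have "C (u(i:=a)) \<le> C (u(i:=u i))" by (rule cop_mono_coord[OF C u a(1) True]) (use u in auto)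
    moreover have "C (u(i:=u i)) - C (u(i:=a)) \<le> u i - a"
      by (rule cop_delta_le[OF C u a(1) True]) (use u in auto)
    ultimately show ?thesis using True by simp
  next
    case False
    have "C (u(i:=u i)) \<le> C (u(i:=a))" by (rule cop_mono_coord[OF C u]) (use u False a in auto)
    moreover have "C (u(i:=a)) - C (u(i:=u i)) \<le> a - u i"
      by (rule cop_delta_le[OF C u]) (use u False a in auto)
    ultimately show ?thesis using False by simp
  qed
qed

lemma cop_lip_cube:
  fixes C :: "('d::finite \<Rightarrow> real) \<Rightarrow> real"
  assumes C: "is_copula C" and u: "\<And>k. 0 \<le> u k \<and> u k \<le> 1" and v: "\<And>k. 0 \<le> v k \<and> v k \<le> 1"
  shows "\<bar>C u - C v\<bar> \<le> (\<Sum>k\<in>UNIV. \<bar>u k - v k\<bar>)"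
proof -
  have step: "\<bar>C u - C (\<lambda>k. if k \<in> J then v k else u k)\<bar> \<le> (\<Sum>k\<in>J. \<bar>u k - v k\<bar>)"
    if "finite J" for J
    using that
  proof (induction J rule: finite_induct)
    case empty
    then show ?case by simp
  next
    case (insert j J)
    define w where "w = (\<lambda>k. if k \<in> J then v k else u k)"
    have w: "\<And>k. 0 \<le> w k \<and> w k \<le> 1" using u v by (auto simp: w_def)
    have eq: "(\<lambda>k. if k \<in> insert j J then v k else u k) = w(j:=v j)"
      by (auto simp: w_def)
    have "\<bar>C w - C (w(j:=v j))\<bar> \<le> \<bar>w j - v j\<bar>"
      by (rule cop_coord_lip[OF C w]) (use v in auto)
    also have "w j = u j" using insert.hyps by (simp add: w_def)
    finally have "\<bar>C w - C (w(j:=v j))\<bar> \<le> \<bar>u j - v j\<bar>" .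
    then show ?case using insert.IH insert.hyps unfolding eq w_def[symmetric] by simp
  qed
  from step[of UNIV] show ?thesis by simp
qed

lemma cop_lip:
  fixes C :: "('d::finite \<Rightarrow> real) \<Rightarrow> real"
  assumes C: "is_copula C"
  shows "\<bar>C u - C v\<bar> \<le> (\<Sum>k\<in>UNIV. \<bar>u k - v k\<bar>)"
proof -
  have cl: "\<And>w. C w = C (\<lambda>i. clamp01 (w i))" using C unfolding is_copula_def by blast
  have "\<bar>C (\<lambda>i. clamp01 (u i)) - C (\<lambda>i. clamp01 (v i))\<bar> \<le> (\<Sum>k\<in>UNIV. \<bar>clamp01 (u k) - clamp01 (v k)\<bar>)"
    by (rule cop_lip_cube[OF C]) (auto simp: clamp01_in)
  also have "\<dots> \<le> (\<Sum>k\<in>UNIV. \<bar>u k - v k\<bar>)"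
    by (intro sum_mono clamp01_lip)
  finally show ?thesis using cl[of u] cl[of v] by simp
qed

lemma cop_nonneg:
  fixes C :: "('d::finite \<Rightarrow> real) \<Rightarrow> real"
  assumes C: "is_copula C"
  shows "0 \<le> C u"
proof -
  define v where "v = (\<lambda>i. clamp01 (u i))"
  have v: "\<And>k. 0 \<le> v k \<and> v k \<le> 1" by (auto simp: v_def clamp01_in)
  fix i :: 'd
  have "C (v(i:=0)) \<le> C (v(i:=v i))" by (rule cop_mono_coord[OF C v]) (use v in auto)
  moreover have "C (v(i:=0)) = 0"
  proof -
    have g: "\<forall>u. (\<forall>i. 0 \<le> u i \<and> u i \<le> 1) \<longrightarrow> (\<exists>i. u i = 0) \<longrightarrow> C u = 0"
      using C unfolding is_copula_def by blast
    have "\<forall>k. 0 \<le> (v(i:=0)) k \<and> (v(i:=0)) k \<le> 1" using v by simp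
    moreover have "\<exists>k. (v(i:=0)) k = 0" by (intro exI[of _ i]) simp
    ultimately show ?thesis using g by blast
  qed
  moreover have "C u = C v" using C unfolding is_copula_def v_def by blast
  ultimately show ?thesis by simp
qed

lemma cop_upper:
  fixes C :: "('d::finite \<Rightarrow> real) \<Rightarrow> real"
  assumes C: "is_copula C"
  shows "C u \<le> clamp01 (u i)"
proof -
  define v where "v = (\<lambda>i. clamp01 (u i))"
  have v: "\<And>k. 0 \<le> v k \<and> v k \<le> 1" by (auto simp: v_def clamp01_in)
  have "C (v(i:=v i)) - C (v(i:=0)) \<le> v i - 0" by (rule cop_delta_le[OF C v]) (use v in auto)
  moreover have "C (v(i:=0)) = 0"
  proof -
    have g: "\<forall>u. (\<forall>i. 0 \<le> u i \<and> u i \<le> 1) \<longrightarrow> (\<exists>i. u i = 0) \<longrightarrow> C u = 0"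
      using C unfolding is_copula_def by blast
    have "\<forall>k. 0 \<le> (v(i:=0)) k \<and> (v(i:=0)) k \<le> 1" using v by simp
    moreover have "\<exists>k. (v(i:=0)) k = 0" by (intro exI[of _ i]) simp
    ultimately show ?thesis using g by blast
  qed
  moreover have "C u = C v" using C unfolding is_copula_def v_def by blast
  moreover have "v(i:=v i) = v" by simp
  ultimately show ?thesis by (simp add: v_def)
qed

lemma cop_tendsto:
  fixes C :: "('d::finite \<Rightarrow> real) \<Rightarrow> real"
  assumes C: "is_copula C" and X: "\<And>i. ((\<lambda>z. X z i) \<longlongrightarrow> Y i) F"
  shows "((\<lambda>z. C (X z)) \<longlongrightarrow> C Y) F"
proof -
  have "((\<lambda>z. (\<Sum>k\<in>UNIV. \<bar>X z k - Y k\<bar>)) \<longlongrightarrow> 0) F"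
    using X by (auto intro!: tendsto_null_sum tendsto_rabs_zero simp: LIM_zero_iff)
  then have "((\<lambda>z. C (X z) - C Y) \<longlongrightarrow> 0) F"
    by (rule Lim_null_comparison[rotated]) (auto intro!: always_eventually cop_lip[OF C])
  then show ?thesis by (simp add: LIM_zero_iff)
qed

lemma cop_cont:
  fixes C :: "('d::finite \<Rightarrow> real) \<Rightarrow> real"
  assumes C: "is_copula C"
  shows "continuous_on UNIV C"
  unfolding continuous_on_def
proof (intro ballI)
  fix x :: "'d \<Rightarrow> real"
  show "(C \<longlongrightarrow> C x) (at x within UNIV)"
  proof (rule cop_tendsto[OF C, of "\<lambda>z. z" x "at x within UNIV", simplified])
    fix i
    show "((\<lambda>z. z i) \<longlongrightarrow> x i) (at x)"
    proof -
      have "\<forall>x. ((\<lambda>x. x i) \<longlongrightarrow> x i) (at x)"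
        using continuous_on_product_coordinates[of i] by (simp add: continuous_on_def)
      then show ?thesis by (rule spec)
    qed
  qed
qed

lemma cop_meas:
  fixes C :: "('d::finite \<Rightarrow> real) \<Rightarrow> real"
  assumes C: "is_copula C"
  shows "C \<in> borel_measurable borel"
  by (rule borel_measurable_continuous_onI[OF cop_cont[OF C]])


lemma cop2_props:
  assumes D: "is_copula2 D" and xy: "x \<le> y"
  shows "D x v \<le> D y v" "D y v - D x v \<le> y - x"
proof -
  define x' y' v' where "x' = clamp01 x" "y' = clamp01 y" "v' = clamp01 v"
  have r: "0 \<le> x'" "x' \<le> y'" "y' \<le> 1" "0 \<le> v'" "v' \<le> 1"
    using xy by (auto simp: x'_y'_v'_def clamp01_def)
  have eqs: "D x v = D x' v'" "D y v = D y' v'" using D unfolding is_copula2_def x'_y'_v'_def by blast+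
  have b: "\<forall>x. 0 \<le> x \<and> x \<le> 1 \<longrightarrow> D 0 x = 0 \<and> D x 0 = 0 \<and> D x 1 = x \<and> D 1 x = x"
    using D unfolding is_copula2_def by blast
  have inc: "\<forall>a1 a2 b1 b2. 0 \<le> a1 \<and> a1 \<le> b1 \<and> b1 \<le> 1 \<and> 0 \<le> a2 \<and> a2 \<le> b2 \<and> b2 \<le> 1 \<longrightarrow>
        0 \<le> D b1 b2 - D a1 b2 - D b1 a2 + D a1 a2"
    using D unfolding is_copula2_def by blast
  have "0 \<le> D y' v' - D x' v' - D y' 0 + D x' 0" using inc r by auto
  moreover have "D y' 0 = 0" "D x' 0 = 0" "D y' 1 = y'" "D x' 1 = x'" using b r by auto
  moreover have "0 \<le> D y' 1 - D x' 1 - D y' v' + D x' v'" using inc r by auto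
  moreover have "y' - x' \<le> y - x" using xy by (auto simp: x'_y'_v'_def clamp01_def)
  ultimately show "D x v \<le> D y v" "D y v - D x v \<le> y - x" unfolding eqs by linarith+
qed

lemma cop2_cont:
  assumes D: "is_copula2 D"
  shows "continuous_on UNIV (\<lambda>x. D x v)"
proof -
  have "dist (D x v) (D y v) \<le> 1 * dist x y" for x y
  proof (cases "x \<le> y")
    case True
    then show ?thesis using cop2_props[OF D True, of v] by (simp add: dist_real_def)
  next
    case False
    then have "y \<le> x" by simp
    then show ?thesis using cop2_props[OF D \<open>y \<le> x\<close>, of v] by (simp add: dist_real_def)
  qed
  then have "lipschitz_on 1 UNIV (\<lambda>x. D x v)" by (intro lipschitz_onI) auto
  then show ?thesis by (rule lipschitz_on_continuous_on)
qed

lemma deriv_nonneg_mono: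
  fixes f :: "real \<Rightarrow> real"
  assumes mono: "\<And>x y. x \<le> y \<Longrightarrow> f x \<le> f y" and d: "f differentiable (at t)"
  shows "0 \<le> deriv f t"
proof -
  have "(f has_real_derivative deriv f t) (at t)" using d DERIV_deriv_iff_real_differentiable by blast
  then have lim: "((\<lambda>h. (f (t + h) - f t) / h) \<longlongrightarrow> deriv f t) (at 0)" by (simp add: DERIV_def)
  show ?thesis
  proof (rule tendsto_lowerbound[OF lim])
    show "\<forall>\<^sub>F h in at 0. 0 \<le> (f (t + h) - f t) / h"
    proof (rule always_eventually, rule allI)
      fix h :: real
      show "0 \<le> (f (t + h) - f t) / h"
      proof (cases "0 \<le> h")
        case True then show ?thesis using mono[of t "t+h"] by simp
      next
        case False then show ?thesis using mono[of "t+h" t] by (simp add: divide_nonpos_neg)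
      qed
    qed
  qed simp
qed

lemma rat_dense_le:
  fixes g :: "real \<Rightarrow> real"
  assumes U: "open U" and g: "continuous_on U g" and r: "\<And>x. x \<in> U \<Longrightarrow> x \<in> \<rat> \<Longrightarrow> g x \<le> e"
    and x: "x \<in> U"
  shows "g x \<le> e"
proof (rule ccontr)
  assume "\<not> g x \<le> e"
  then have gx: "g x - e > 0" by simp
  obtain d where d: "d > 0" "\<forall>x'\<in>U. dist x' x < d \<longrightarrow> dist (g x') (g x) < g x - e"
    using g x gx unfolding continuous_on_iff by blast
  obtain d' where d': "d' > 0" "ball x d' \<subseteq> U" using U x open_contains_ball by blast
  obtain q where q: "q \<in> \<rat>" "x < q" "q < x + min d d'"
    using Rats_dense_in_real[of x "x + min d d'"] d d' by auto
  have qU: "q \<in> U" using d' q by (auto simp: dist_real_def)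
  have "dist (g q) (g x) < g x - e" using d qU q by (auto simp: dist_real_def)
  then have "g q > e" by (auto simp: dist_real_def)
  with r[OF qU q(1)] show False by simp
qed


definition dq :: "(real \<Rightarrow> real) \<Rightarrow> real \<Rightarrow> real \<Rightarrow> real" where
  "dq f t h = (f (t + h) - f t) / h"

definition Pdiff :: "(real \<Rightarrow> real) \<Rightarrow> real \<Rightarrow> bool" where
  "Pdiff f t \<longleftrightarrow> (\<forall>n::nat. \<exists>m::nat. \<forall>q::rat. \<forall>r::rat.
     (of_rat q \<noteq> (0::real) \<and> \<bar>of_rat q\<bar> < 1 / real (Suc m) \<and> of_rat r \<noteq> (0::real) \<and> \<bar>of_rat r\<bar> < 1 / real (Suc m))
      \<longrightarrow> \<bar>dq f t (of_rat q) - dq f t (of_rat r)\<bar> \<le> 1 / real (Suc n))"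

lemma dq_cont:
  assumes "continuous_on UNIV f"
  shows "continuous_on {h. h \<noteq> 0} (dq f t)"
  unfolding dq_def
  by (intro continuous_intros continuous_on_compose2[OF assms]) auto

lemma open_punct: "open {h::real. h \<noteq> 0 \<and> \<bar>h\<bar> < c}"
proof -
  have "{h::real. h \<noteq> 0 \<and> \<bar>h\<bar> < c} = (- {0}) \<inter> {h. \<bar>h\<bar> < c}" by auto
  moreover have "open {h::real. \<bar>h\<bar> < c}"
    by (intro open_Collect_less continuous_intros)
  ultimately show ?thesis by (auto intro: open_Int)
qed

lemma diff_imp_Pdiff:
  assumes d: "f differentiable (at t)"
  shows "Pdiff f t"
  unfolding Pdiff_def
proof
  fix n :: nat
  have "(f has_real_derivative deriv f t) (at t)" using d DERIV_deriv_iff_real_differentiable by blast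
  then have lim: "(dq f t \<longlongrightarrow> deriv f t) (at 0)" unfolding dq_def by (simp add: DERIV_def)
  have e: "0 < 1 / (2 * real (Suc n))" by simp
  obtain s where s: "s > 0" "\<forall>x. x \<noteq> 0 \<and> dist x 0 < s \<longrightarrow> dist (dq f t x) (deriv f t) < 1 / (2 * real (Suc n))"
    using metric_LIM_D[OF lim e] by blast
  obtain m where m: "inverse (real (Suc m)) < s" using reals_Archimedean[OF s(1)] by blast
  show "\<exists>m::nat. \<forall>q::rat. \<forall>r::rat.
     (of_rat q \<noteq> (0::real) \<and> \<bar>of_rat q\<bar> < 1 / real (Suc m) \<and> of_rat r \<noteq> (0::real) \<and> \<bar>of_rat r\<bar> < 1 / real (Suc m))
      \<longrightarrow> \<bar>dq f t (of_rat q) - dq f t (of_rat r)\<bar> \<le> 1 / real (Suc n)"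
  proof (intro exI[of _ m] allI impI)
    fix q r :: rat
    assume h: "of_rat q \<noteq> (0::real) \<and> \<bar>of_rat q\<bar> < 1 / real (Suc m) \<and> of_rat r \<noteq> (0::real) \<and> \<bar>of_rat r\<bar> < 1 / real (Suc m)"
    have iq: "\<bar>of_rat q\<bar> < s" "\<bar>of_rat r\<bar> < s" using h m by (auto simp: inverse_eq_divide)
    have "dist (dq f t (of_rat q)) (deriv f t) < 1 / (2 * real (Suc n))"
      using s(2) h iq by (simp add: dist_real_def)
    moreover have "dist (dq f t (of_rat r)) (deriv f t) < 1 / (2 * real (Suc n))"
      using s(2) h iq by (simp add: dist_real_def)
    moreover have "1 / (2 * real (Suc n)) + 1 / (2 * real (Suc n)) = 1 / real (Suc n)" by (simp add: field_simps)
    ultimately show "\<bar>dq f t (of_rat q) - dq f t (of_rat r)\<bar> \<le> 1 / real (Suc n)"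
      unfolding dist_real_def by (smt (verit))
  qed
qed


lemma Pdiff_real:
  assumes f: "continuous_on UNIV f" and P: "Pdiff f t"
  shows "\<exists>m::nat. \<forall>h h'. h \<noteq> 0 \<and> \<bar>h\<bar> < 1 / real (Suc m) \<and> h' \<noteq> 0 \<and> \<bar>h'\<bar> < 1 / real (Suc m)
      \<longrightarrow> \<bar>dq f t h - dq f t h'\<bar> \<le> 1 / real (Suc n)"
proof -
  obtain m where m: "\<forall>q::rat. \<forall>r::rat.
     (of_rat q \<noteq> (0::real) \<and> \<bar>of_rat q\<bar> < 1 / real (Suc m) \<and> of_rat r \<noteq> (0::real) \<and> \<bar>of_rat r\<bar> < 1 / real (Suc m))
      \<longrightarrow> \<bar>dq f t (of_rat q) - dq f t (of_rat r)\<bar> \<le> 1 / real (Suc n)"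
    using P unfolding Pdiff_def by blast
  define U where "U = {h::real. h \<noteq> 0 \<and> \<bar>h\<bar> < 1 / real (Suc m)}"
  have U: "open U" unfolding U_def by (rule open_punct)
  have cU: "continuous_on U (dq f t)"
    by (rule continuous_on_subset[OF dq_cont[OF f]]) (auto simp: U_def)
  have step1: "\<bar>dq f t h - dq f t r\<bar> \<le> 1 / real (Suc n)" if h: "h \<in> U" and r: "r \<in> U" "r \<in> \<rat>" for h r
  proof (rule rat_dense_le[OF U _ _ h, where g = "\<lambda>h. \<bar>dq f t h - dq f t r\<bar>"])
    show "continuous_on U (\<lambda>h. \<bar>dq f t h - dq f t r\<bar>)"
      by (intro continuous_intros cU)
    fix x assume x: "x \<in> U" "x \<in> \<rat>"
    obtain q where q: "x = of_rat q" using x(2) Rats_cases by blast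
    obtain q' where q': "r = of_rat q'" using r(2) Rats_cases by blast
    show "\<bar>dq f t x - dq f t r\<bar> \<le> 1 / real (Suc n)"
      using m[rule_format, of q q'] x r unfolding q q' U_def by auto
  qed
  have step2: "\<bar>dq f t h - dq f t h'\<bar> \<le> 1 / real (Suc n)" if h: "h \<in> U" and h': "h' \<in> U" for h h'
  proof (rule rat_dense_le[OF U _ _ h', where g = "\<lambda>h'. \<bar>dq f t h - dq f t h'\<bar>"])
    show "continuous_on U (\<lambda>h'. \<bar>dq f t h - dq f t h'\<bar>)"
      by (intro continuous_intros cU)
    fix x assume x: "x \<in> U" "x \<in> \<rat>"
    show "\<bar>dq f t h - dq f t x\<bar> \<le> 1 / real (Suc n)" using step1[OF h x] by simp
  qed
  show ?thesis by (intro exI[of _ m]) (use step2 in \<open>auto simp: U_def\<close>)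
qed

lemma Pdiff_imp_diff:
  assumes f: "continuous_on UNIV f" and P: "Pdiff f t"
  shows "f differentiable (at t)"
proof -
  define a where "a k = dq f t (1 / real (Suc k))" for k
  have A: "\<exists>m::nat. \<forall>h h'. h \<noteq> 0 \<and> \<bar>h\<bar> < 1 / real (Suc m) \<and> h' \<noteq> 0 \<and> \<bar>h'\<bar> < 1 / real (Suc m)
      \<longrightarrow> \<bar>dq f t h - dq f t h'\<bar> \<le> 1 / real (Suc n)" for n
    by (rule Pdiff_real[OF f P])
  have small: "1 / real (Suc k) < 1 / real (Suc m)" if "Suc m \<le> k" for k m
    using that by (simp add: frac_less2)
  have "Cauchy a"
  proof (rule metric_CauchyI)
    fix e :: real assume e: "0 < e"
    obtain n where n: "inverse (real (Suc n)) < e" using reals_Archimedean[OF e] by blast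
    obtain m where m: "\<forall>h h'. h \<noteq> 0 \<and> \<bar>h\<bar> < 1 / real (Suc m) \<and> h' \<noteq> 0 \<and> \<bar>h'\<bar> < 1 / real (Suc m)
      \<longrightarrow> \<bar>dq f t h - dq f t h'\<bar> \<le> 1 / real (Suc n)" using A by blast
    show "\<exists>M. \<forall>k\<ge>M. \<forall>l\<ge>M. dist (a k) (a l) < e"
    proof (intro exI[of _ "Suc m"] allI impI)
      fix k l assume k: "Suc m \<le> k" and l: "Suc m \<le> l"
      have "\<bar>a k - a l\<bar> \<le> 1 / real (Suc n)"
        unfolding a_def using m small[OF k] small[OF l] by auto
      then show "dist (a k) (a l) < e" using n by (simp add: dist_real_def inverse_eq_divide)
    qed
  qed
  then obtain L where L: "a \<longlonglongrightarrow> L" using Cauchy_convergent_iff convergent_def by blast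
  have "(dq f t \<longlongrightarrow> L) (at 0)"
  proof (rule metric_LIM_I)
    fix r :: real assume r: "0 < r"
    obtain n where n: "inverse (real (Suc n)) < r / 2" using reals_Archimedean[of "r/2"] r by auto
    obtain m where m: "\<forall>h h'. h \<noteq> 0 \<and> \<bar>h\<bar> < 1 / real (Suc m) \<and> h' \<noteq> 0 \<and> \<bar>h'\<bar> < 1 / real (Suc m)
      \<longrightarrow> \<bar>dq f t h - dq f t h'\<bar> \<le> 1 / real (Suc n)" using A by blast
    obtain K where K: "\<forall>k\<ge>K. dist (a k) L < r / 2"
      using L r unfolding lim_sequentially by (meson half_gt_zero)
    define k where "k = max K (Suc m)"
    have k1: "dist (a k) L < r / 2" using K by (simp add: k_def)
    have k2: "1 / real (Suc k) < 1 / real (Suc m)" by (rule small) (simp add: k_def)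
    show "\<exists>s>0. \<forall>x. x \<noteq> 0 \<and> dist x 0 < s \<longrightarrow> dist (dq f t x) L < r"
    proof (intro exI[of _ "1 / real (Suc m)"] conjI allI impI)
      fix x :: real assume x: "x \<noteq> 0 \<and> dist x 0 < 1 / real (Suc m)"
      have "\<bar>dq f t x - a k\<bar> \<le> 1 / real (Suc n)"
        unfolding a_def using m x k2 by (auto simp: dist_real_def)
      moreover have "1 / real (Suc n) < r / 2" using n by (simp add: inverse_eq_divide)
      moreover have "\<bar>dq f t x - L\<bar> \<le> \<bar>dq f t x - a k\<bar> + \<bar>a k - L\<bar>" by arith
      ultimately show "dist (dq f t x) L < r" using k1 unfolding dist_real_def by linarith
    qed simp
  qed
  then have "(f has_real_derivative L) (at t)" unfolding DERIV_def dq_def .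
  then show ?thesis using DERIV_imp_deriv DERIV_deriv_iff_real_differentiable by metis
qed


lemma Pdiff_iff:
  assumes f: "continuous_on UNIV f"
  shows "Pdiff f t \<longleftrightarrow> f differentiable (at t)"
  using Pdiff_imp_diff[OF f] diff_imp_Pdiff by blast

lemma partial_meas:
  fixes f :: "real \<Rightarrow> real"
  assumes f: "continuous_on UNIV f"
  shows "(\<lambda>t. if f differentiable (at t) then deriv f t else 0) \<in> borel_measurable borel"
proof -
  have fm[measurable]: "f \<in> borel_measurable borel" by (rule borel_measurable_continuous_onI[OF f])
  have S: "{t. Pdiff f t} \<in> sets borel"
    unfolding Pdiff_def dq_def by measurable
  define G where "G t = lim (\<lambda>k. dq f t (inverse (real (Suc k))))" for t
  have Gm: "G \<in> borel_measurable borel"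
    unfolding G_def dq_def by measurable
  have eq: "(\<lambda>t. if f differentiable (at t) then deriv f t else 0) = (\<lambda>t. if t \<in> {t. Pdiff f t} then G t else 0)"
  proof
    fix t
    show "(if f differentiable (at t) then deriv f t else 0) = (if t \<in> {t. Pdiff f t} then G t else 0)"
    proof (cases "f differentiable (at t)")
      case True
      have "(f has_real_derivative deriv f t) (at t)" using True DERIV_deriv_iff_real_differentiable by blast
      then have lim: "(dq f t \<longlongrightarrow> deriv f t) (at 0)" unfolding dq_def by (simp add: DERIV_def)
      have "filterlim (\<lambda>k. inverse (real (Suc k))) (at 0) sequentially"
        unfolding filterlim_at using LIMSEQ_inverse_real_of_nat by auto
      from filterlim_compose[OF lim this] have "(\<lambda>k. dq f t (inverse (real (Suc k)))) \<longlonglongrightarrow> deriv f t" .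
      then have "G t = deriv f t" unfolding G_def by (rule limI)
      then show ?thesis using True Pdiff_iff[OF f] by simp
    next
      case False
      then show ?thesis using Pdiff_iff[OF f] by simp
    qed
  qed
  show ?thesis unfolding eq
    by (rule measurable_If_set[OF Gm]) (use S in auto)
qed

lemma partial1_meas:
  assumes D: "is_copula2 D"
  shows "(\<lambda>t. partial1 D t v) \<in> borel_measurable borel"
  unfolding partial1_def by (rule partial_meas[OF cop2_cont[OF D]])

lemma partial1_nonneg:
  assumes D: "is_copula2 D"
  shows "0 \<le> partial1 D t v"
  unfolding partial1_def using deriv_nonneg_mono[of "\<lambda>x. D x v" t] cop2_props(1)[OF D] by auto


lemma integrand_meas:
  fixes C :: "('d::finite \<Rightarrow> real) \<Rightarrow> real"
  assumes C: "is_copula C" and Cs: "\<And>i. is_copula2 (Cs i)"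
  shows "(\<lambda>t. C (\<lambda>i. partial1 (Cs i) (a * t) (v i))) \<in> borel_measurable borel"
proof -
  have "(\<lambda>t. \<lambda>i. partial1 (Cs i) (a * t) (v i)) \<in> borel_measurable borel"
  proof (rule measurable_coordinatewise_then_product)
    fix i
    show "(\<lambda>t. partial1 (Cs i) (a * t) (v i)) \<in> borel_measurable borel"
      by (rule measurable_compose[OF _ partial1_meas[OF Cs]]) measurable
  qed
  then show ?thesis by (rule measurable_compose[OF _ cop_meas[OF C]])
qed

lemma C_bounds:
  fixes C :: "('d::finite \<Rightarrow> real) \<Rightarrow> real"
  assumes C: "is_copula C"
  shows "0 \<le> C u" "C u \<le> 1"
  using cop_nonneg[OF C] cop_upper[OF C, of u undefined] clamp01_in[of "u undefined"] by auto

lemma change_var: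
  fixes C :: "('d::finite \<Rightarrow> real) \<Rightarrow> real"
  assumes C: "is_copula C" and Cs: "\<And>i. is_copula2 (Cs i)" and s: "0 < s"
  shows "ennreal (phiC C Cs v) = ennreal s *
     (\<integral>\<^sup>+ \<tau>. ennreal (indicator {0..1} (s * \<tau>) * C (\<lambda>i. partial1 (Cs i) (s * \<tau>) (v i))) \<partial>lborel)"
proof -
  define h where "h t = indicator {0..1} t * C (\<lambda>i. partial1 (Cs i) t (v i))" for t :: real
  have hm: "h \<in> borel_measurable borel"
    unfolding h_def using integrand_meas[OF C Cs, where a=1 and v=v] by simp
  have hi: "integrable lborel h"
  proof (rule Bochner_Integration.integrable_bound[OF integrable_real_indicator[of "{0..1::real}" lborel]])
    show "h \<in> borel_measurable lborel" using hm by simp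
    show "AE x in lborel. norm (h x) \<le> norm (indicator {0..1::real} x :: real)"
      using C_bounds[OF C] by (auto simp: h_def indicator_def)
  qed auto
  have "phiC C Cs v = integral\<^sup>L lborel h"
    unfolding phiC_def set_lebesgue_integral_def h_def by simp
  then have "ennreal (phiC C Cs v) = (\<integral>\<^sup>+ t. ennreal (h t) \<partial>lborel)"
    using nn_integral_eq_integral[OF hi] C_bounds[OF C] by (simp add: h_def)
  also have "\<dots> = ennreal \<bar>s\<bar> * (\<integral>\<^sup>+ \<tau>. ennreal (h (0 + s * \<tau>)) \<partial>lborel)"
    by (rule nn_integral_real_affine) (use hm s in auto)
  finally show ?thesis using s by (simp add: h_def)
qed


lemma phiC_nonneg:
  fixes C :: "('d::finite \<Rightarrow> real) \<Rightarrow> real"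
  assumes C: "is_copula C"
  shows "0 \<le> phiC C Cs v"
  unfolding phiC_def set_lebesgue_integral_def
  by (rule Bochner_Integration.integral_nonneg) (use C_bounds[OF C] in \<open>auto simp: indicator_def\<close>)

context
  fixes C :: "('d::finite \<Rightarrow> real) \<Rightarrow> real"
    and Cs :: "'d \<Rightarrow> real \<Rightarrow> real \<Rightarrow> real"
    and Ls :: "'d \<Rightarrow> real \<Rightarrow> real \<Rightarrow> real"
    and L :: "('d \<Rightarrow> real) \<Rightarrow> real"
    and w :: "'d \<Rightarrow> real" and c :: real
  assumes C: "is_copula C"
    and Cs: "\<And>i. is_copula2 (Cs i)"
    and L: "is_tdf (phiC C Cs) L"
    and conv: "\<And>i w. 0 \<le> w \<Longrightarrow> AE t in lborel. 0 \<le> t \<longrightarrow>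
                 ((\<lambda>s. partial1 (Cs i) (s * t) (s * w)) \<longlongrightarrow> partial1 (Ls i) t w) (at_right 0)"
    and w: "\<And>i. 0 \<le> w i" and c: "1 \<le> c"
begin

definition sq :: "nat \<Rightarrow> real" where "sq n = inverse c * inverse (real (Suc n))"

definition uu :: "nat \<Rightarrow> real \<Rightarrow> ennreal" where
  "uu n \<tau> = ennreal (indicator {0..1} (sq n * \<tau>) * C (\<lambda>i. partial1 (Cs i) (sq n * \<tau>) (sq n * w i)))"

lemma sq_pos: "0 < sq n"
  using c by (simp add: sq_def)

lemma sq_lim: "sq \<longlonglongrightarrow> 0"
proof -
  have "(\<lambda>n. inverse c * inverse (real (Suc n))) \<longlonglongrightarrow> inverse c * 0"
    by (intro tendsto_mult tendsto_const LIMSEQ_inverse_real_of_nat)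
  then show ?thesis by (simp add: sq_def[abs_def])
qed

lemma sq_filterlim: "filterlim sq (at_right 0) sequentially"
  by (rule tendsto_imp_filterlim_at_right[OF sq_lim]) (simp add: sq_pos)

lemma uu_int: "(\<integral>\<^sup>+ \<tau>. uu n \<tau> \<partial>lborel) = ennreal (phiC C Cs (\<lambda>i. sq n * w i) / sq n)"
proof -
  define X where "X = (\<integral>\<^sup>+ \<tau>. uu n \<tau> \<partial>lborel)"
  have e: "ennreal (phiC C Cs (\<lambda>i. sq n * w i)) = ennreal (sq n) * X"
    unfolding X_def uu_def by (rule change_var[OF C Cs sq_pos])
  have "ennreal (phiC C Cs (\<lambda>i. sq n * w i) / sq n)
      = ennreal (phiC C Cs (\<lambda>i. sq n * w i)) * ennreal (inverse (sq n))"
    using phiC_nonneg[OF C] sq_pos[of n] by (simp add: divide_inverse ennreal_mult)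
  also have "\<dots> = X * (ennreal (sq n) * ennreal (inverse (sq n)))"
    unfolding e by (simp add: mult_ac)
  also have "ennreal (sq n) * ennreal (inverse (sq n)) = 1"
    using sq_pos[of n] by (simp flip: ennreal_mult)
  finally show ?thesis by (simp add: X_def)
qed

lemma uu_lim: "(\<lambda>n. ennreal (phiC C Cs (\<lambda>i. sq n * w i) / sq n)) \<longlonglongrightarrow> ennreal (L w)"
proof -
  have "((\<lambda>s. phiC C Cs (\<lambda>i. s * w i) / s) \<longlongrightarrow> L w) (at_right 0)"
    using L w unfolding is_tdf_def by blast
  from filterlim_compose[OF this sq_filterlim] show ?thesis by (rule tendsto_ennrealI)
qed

lemma uu_meas: "uu n \<in> borel_measurable borel"
proof -
  have [measurable]: "(\<lambda>t. C (\<lambda>i. partial1 (Cs i) (sq n * t) (sq n * w i))) \<in> borel_measurable borel"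
    by (rule integrand_meas[OF C Cs])
  show ?thesis unfolding uu_def[abs_def] by measurable
qed

lemma uu_ae: "AE \<tau> in lborel. (\<lambda>n. uu n \<tau>) \<longlonglongrightarrow> ennreal (C (\<lambda>i. partial1 (Ls i) \<tau> (w i))) * indicator {0..} \<tau>"
proof -
  have "AE \<tau> in lborel. \<forall>i\<in>UNIV. 0 \<le> \<tau> \<longrightarrow>
      ((\<lambda>s. partial1 (Cs i) (s * \<tau>) (s * w i)) \<longlongrightarrow> partial1 (Ls i) \<tau> (w i)) (at_right 0)"
    by (rule AE_finite_allI) (auto intro: conv w)
  then show ?thesis
  proof (rule AE_mp, intro AE_I2 impI)
    fix \<tau> :: real
    assume h: "\<forall>i\<in>UNIV. 0 \<le> \<tau> \<longrightarrow>
      ((\<lambda>s. partial1 (Cs i) (s * \<tau>) (s * w i)) \<longlongrightarrow> partial1 (Ls i) \<tau> (w i)) (at_right 0)"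
    show "(\<lambda>n. uu n \<tau>) \<longlonglongrightarrow> ennreal (C (\<lambda>i. partial1 (Ls i) \<tau> (w i))) * indicator {0..} \<tau>"
    proof (cases "0 \<le> \<tau>")
      case False
      have "uu n \<tau> = 0" for n
      proof -
        have "sq n * \<tau> < 0" using sq_pos[of n] False by (simp add: mult_pos_neg)
        then show ?thesis by (simp add: uu_def indicator_def)
      qed
      then show ?thesis using False by simp
    next
      case True
      have lim: "(\<lambda>n. C (\<lambda>i. partial1 (Cs i) (sq n * \<tau>) (sq n * w i))) \<longlonglongrightarrow> C (\<lambda>i. partial1 (Ls i) \<tau> (w i))"
      proof (rule cop_tendsto[OF C])
        fix i
        show "(\<lambda>n. partial1 (Cs i) (sq n * \<tau>) (sq n * w i)) \<longlonglongrightarrow> partial1 (Ls i) \<tau> (w i)"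
          using filterlim_compose[OF h[rule_format, OF UNIV_I True] sq_filterlim] by simp
      qed
      have "(\<lambda>n. sq n * \<tau>) \<longlonglongrightarrow> 0 * \<tau>" by (intro tendsto_mult sq_lim tendsto_const)
      then have "eventually (\<lambda>n. sq n * \<tau> < 1) sequentially" by (simp add: order_tendstoD)
      then have ev: "eventually (\<lambda>n. ennreal (C (\<lambda>i. partial1 (Cs i) (sq n * \<tau>) (sq n * w i))) = uu n \<tau>) sequentially"
      proof eventually_elim
        case (elim n)
        have "0 \<le> sq n * \<tau>" using True sq_pos[of n] by simp
        then show ?case using elim by (simp add: uu_def indicator_def)
      qed
      have "(\<lambda>n. ennreal (C (\<lambda>i. partial1 (Cs i) (sq n * \<tau>) (sq n * w i)))) \<longlonglongrightarrow> ennreal (C (\<lambda>i. partial1 (Ls i) \<tau> (w i)))"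
        by (rule tendsto_ennrealI[OF lim])
      then have "(\<lambda>n. uu n \<tau>) \<longlonglongrightarrow> ennreal (C (\<lambda>i. partial1 (Ls i) \<tau> (w i)))"
        by (rule Lim_transform_eventually[OF _ ev])
      then show ?thesis using True by simp
    qed
  qed
qed

lemma phiL_liminf: "phiL C Ls w = (\<integral>\<^sup>+ \<tau>. liminf (\<lambda>n. uu n \<tau>) \<partial>lborel)"
  unfolding phiL_def
proof (rule nn_integral_cong_AE)
  show "AE x in lborel. ennreal (C (\<lambda>i. partial1 (Ls i) x (w i))) * indicator {0..} x = liminf (\<lambda>n. uu n x)"
    using uu_ae by eventually_elim (simp add: lim_imp_Liminf)
qed

lemma part1: "phiL C Ls w \<le> ennreal (L w)"
proof -
  have m: "\<And>n. uu n \<in> borel_measurable lborel" using uu_meas by simp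
  have "phiL C Ls w \<le> liminf (\<lambda>n. \<integral>\<^sup>+ \<tau>. uu n \<tau> \<partial>lborel)"
    unfolding phiL_liminf by (rule nn_integral_liminf[OF m])
  also have "\<dots> = liminf (\<lambda>n. ennreal (phiC C Cs (\<lambda>i. sq n * w i) / sq n))"
    by (simp add: uu_int)
  also have "\<dots> = ennreal (L w)"
    by (rule lim_imp_Liminf[OF _ uu_lim]) simp
  finally show ?thesis .
qed

lemma part2:
  fixes g :: "real \<Rightarrow> real \<Rightarrow> real"
  assumes gi: "\<forall>w\<in>{0..1}. set_integrable lborel {0..} (g w)"
    and gb: "\<forall>w\<in>{0..1}. \<forall>s\<in>{0<..1}. \<forall>\<tau>\<ge>0.
                 partial1 (Cs l) (s * \<tau>) (s * w) * indicator {0..1/s} \<tau> \<le> g w \<tau>"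
    and cdef: "c = max 1 (w l)"
  shows "phiL C Ls w = ennreal (L w)"
proof -
  define w' where "w' = w l / c"
  have c0: "0 < c" using c by simp
  have w': "w' \<in> {0..1}" using w[of l] cdef c0 by (auto simp: w'_def field_simps)
  define G where "G \<tau> = g w' (\<tau> / c) * indicator {0..} \<tau>" for \<tau> :: real
  have "integrable lborel (\<lambda>x. indicator {0..} x *\<^sub>R g w' x)"
    using gi w' unfolding set_integrable_def by blast
  from lborel_integrable_real_affine[OF this, of "inverse c" 0]
  have "integrable lborel (\<lambda>x. indicator {0..} (0 + inverse c * x) *\<^sub>R g w' (0 + inverse c * x))"
    using c0 by simp
  also have "(\<lambda>x. indicator {0..} (0 + inverse c * x) *\<^sub>R g w' (0 + inverse c * x)) = G"
  proof
    fix x :: real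
    have "(0 \<le> inverse c * x) = (0 \<le> x)" using c0 by (simp add: zero_le_mult_iff)
    then show "indicator {0..} (0 + inverse c * x) *\<^sub>R g w' (0 + inverse c * x) = G x"
      by (simp add: G_def indicator_def divide_inverse mult.commute)
  qed
  finally have Gi: "integrable lborel G" .
  have Gm[measurable]: "G \<in> borel_measurable borel" using borel_measurable_integrable[OF Gi] by simp
  have fin: "(\<integral>\<^sup>+ \<tau>. ennreal (G \<tau>) \<partial>lborel) < \<infinity>"
  proof -
    have "(\<integral>\<^sup>+ \<tau>. ennreal (G \<tau>) \<partial>lborel) \<le> (\<integral>\<^sup>+ \<tau>. ennreal (norm (G \<tau>)) \<partial>lborel)"
      by (intro nn_integral_mono ennreal_leI) simp
    also have "\<dots> < \<infinity>" using Gi unfolding integrable_iff_bounded by blast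
    finally show ?thesis .
  qed
  have bound: "uu n \<tau> \<le> ennreal (G \<tau>)" for n \<tau>
  proof (cases "0 \<le> \<tau> \<and> sq n * \<tau> \<le> 1")
    case False
    have "\<not> (0 \<le> sq n * \<tau> \<and> sq n * \<tau> \<le> 1)"
      using False sq_pos[of n] by (auto simp: zero_le_mult_iff)
    then have "indicator {0..1} (sq n * \<tau>) = (0::real)" by (simp add: indicator_def)
    then have "uu n \<tau> = 0" by (simp add: uu_def)
    then show ?thesis by simp
  next
    case True
    have t0: "0 \<le> sq n * \<tau>" using True sq_pos[of n] by simp
    define x where "x = (\<lambda>i. partial1 (Cs i) (sq n * \<tau>) (sq n * w i))"
    have u: "uu n \<tau> = ennreal (C x)" using True t0 by (simp add: uu_def x_def indicator_def)
    have x0: "0 \<le> x l" unfolding x_def by (rule partial1_nonneg[OF Cs])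
    have "C x \<le> clamp01 (x l)" by (rule cop_upper[OF C])
    also have "\<dots> \<le> x l" using x0 by (simp add: clamp01_def)
    finally have Cx: "C x \<le> x l" .
    define s' where "s' = c * sq n"
    have s': "s' = inverse (real (Suc n))" using c0 by (simp add: s'_def sq_def)
    have s'r: "s' \<in> {0<..1}" unfolding s' by (simp add: field_simps)
    have tau': "0 \<le> \<tau> / c" using True c0 by simp
    have "partial1 (Cs l) (s' * (\<tau> / c)) (s' * w') * indicator {0..1/s'} (\<tau> / c) \<le> g w' (\<tau> / c)"
      using gb w' s'r tau' by blast
    moreover have "s' * (\<tau> / c) = sq n * \<tau>" using c0 by (simp add: s'_def)
    moreover have "s' * w' = sq n * w l" using c0 by (simp add: s'_def w'_def)
    moreover have "indicator {0..1/s'} (\<tau> / c) = (1::real)"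
    proof -
      have "sq n * \<tau> \<le> 1" using True by simp
      then have "\<tau> / (c * real (Suc n)) \<le> 1" by (simp add: sq_def divide_inverse mult_ac)
      moreover have "0 < c * real (Suc n)" using c0 by simp
      ultimately have "\<tau> \<le> c * real (Suc n)" by (simp add: divide_le_eq)
      then have "\<tau> / c \<le> real (Suc n)" using c0 by (simp add: divide_le_eq mult.commute)
      moreover have "1 / s' = real (Suc n)" unfolding s' by (simp add: divide_inverse)
      ultimately show ?thesis using tau' by (simp add: indicator_def)
    qed
    ultimately have "x l \<le> g w' (\<tau> / c)" by (simp add: x_def)
    then have "C x \<le> G \<tau>" using Cx True by (simp add: G_def)
    then show ?thesis unfolding u by (rule ennreal_leI)
  qed
  have m: "\<And>n. uu n \<in> borel_measurable lborel" using uu_meas by simp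
  have lim1: "(\<lambda>n. \<integral>\<^sup>+ \<tau>. uu n \<tau> \<partial>lborel) \<longlonglongrightarrow> (\<integral>\<^sup>+ \<tau>. liminf (\<lambda>n. uu n \<tau>) \<partial>lborel)"
  proof (rule nn_integral_dominated_convergence[where w = "\<lambda>\<tau>. ennreal (G \<tau>)"])
    show "\<And>i. uu i \<in> borel_measurable lborel" by (rule m)
    show "(\<lambda>x. liminf (\<lambda>n. uu n x)) \<in> borel_measurable lborel"
      by (rule borel_measurable_liminf[OF m])
    show "(\<lambda>x. ennreal (G x)) \<in> borel_measurable lborel" by simp
    show "\<And>j. AE x in lborel. uu j x \<le> ennreal (G x)" using bound by simp
    show "(\<integral>\<^sup>+ x. ennreal (G x) \<partial>lborel) < \<infinity>" by (rule fin)
    show "AE x in lborel. (\<lambda>i. uu i x) \<longlonglongrightarrow> liminf (\<lambda>n. uu n x)"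
      using uu_ae by eventually_elim (simp add: lim_imp_Liminf)
  qed
  have lim2: "(\<lambda>n. \<integral>\<^sup>+ \<tau>. uu n \<tau> \<partial>lborel) \<longlonglongrightarrow> ennreal (L w)"
    unfolding uu_int by (rule uu_lim)
  show ?thesis unfolding phiL_liminf using LIMSEQ_unique[OF lim1 lim2] .
qed

end

theorem mainTheorem4:
  fixes C :: "('d::finite \<Rightarrow> real) \<Rightarrow> real"
    and Cs :: "'d \<Rightarrow> real \<Rightarrow> real \<Rightarrow> real"
    and Ls :: "'d \<Rightarrow> real \<Rightarrow> real \<Rightarrow> real"
    and L :: "('d \<Rightarrow> real) \<Rightarrow> real"
  assumes C: "is_copula C"
    and Cs: "\<And>i. is_copula2 (Cs i)"
    and Ls: "\<And>i. is_tdf2 (Cs i) (Ls i)"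
    and L: "is_tdf (phiC C Cs) L"
    and conv: "\<And>i w. 0 \<le> w \<Longrightarrow> AE t in lborel. 0 \<le> t \<longrightarrow>
                 ((\<lambda>s. partial1 (Cs i) (s * t) (s * w)) \<longlongrightarrow> partial1 (Ls i) t w) (at_right 0)"
  shows "(\<forall>w. (\<forall>i. 0 \<le> w i) \<longrightarrow> phiL C Ls w \<le> ennreal (L w)) \<and>
         ((\<exists>l. \<exists>g :: real \<Rightarrow> real \<Rightarrow> real.
             (\<forall>w\<in>{0..1}. set_integrable lborel {0..} (g w)) \<and>
             (\<forall>w\<in>{0..1}. \<forall>s\<in>{0<..1}. \<forall>\<tau>\<ge>0.
                 partial1 (Cs l) (s * \<tau>) (s * w) * indicator {0..1/s} \<tau> \<le> g w \<tau>))
          \<longrightarrow> (\<forall>w. (\<forall>i. 0 \<le> w i) \<longrightarrow> phiL C Ls w = ennreal (L w)))"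
proof (intro conjI allI impI)
  fix w :: "'d \<Rightarrow> real" assume w: "\<forall>i. 0 \<le> w i"
  show "phiL C Ls w \<le> ennreal (L w)"
    by (rule part1[OF C Cs L conv, where w = w and c = 1]) (use w in auto)
next
  fix w :: "'d \<Rightarrow> real"
  assume ex: "\<exists>l. \<exists>g :: real \<Rightarrow> real \<Rightarrow> real.
             (\<forall>w\<in>{0..1}. set_integrable lborel {0..} (g w)) \<and>
             (\<forall>w\<in>{0..1}. \<forall>s\<in>{0<..1}. \<forall>\<tau>\<ge>0.
                 partial1 (Cs l) (s * \<tau>) (s * w) * indicator {0..1/s} \<tau> \<le> g w \<tau>)"
    and w: "\<forall>i. 0 \<le> w i"
  from ex obtain l and g :: "real \<Rightarrow> real \<Rightarrow> real" where
    gi: "\<forall>w\<in>{0..1}. set_integrable lborel {0..} (g w)" and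
    gb: "\<forall>w\<in>{0..1}. \<forall>s\<in>{0<..1}. \<forall>\<tau>\<ge>0.
                 partial1 (Cs l) (s * \<tau>) (s * w) * indicator {0..1/s} \<tau> \<le> g w \<tau>"
    by blast
  show "phiL C Ls w = ennreal (L w)"
    by (rule part2[OF C Cs L conv _ _ gi gb, where w = w and c = "max 1 (w l)"]) (use w in auto)
qed

end
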